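(* For parameters $a,b\in[0,1]$ define $f_{a,b}:[0,1]\to[0,1]$ by $$f_{a,b}(x)=\begin{cases}(1-2a)x^2+2ax, & x\in[0,\frac13],\\ (1-2b)x^2+2bx, & x\in(\frac13,\frac23),\\ x, & x\in[\frac23,1].\end{cases}$$ For each pair $x_1,x_2$ satisfying $$x_1\in\Big(1-\tfrac{\sqrt6}{3},\tfrac13\Big),\qquad x_2\in\Big(\tfrac13,\,x_1(2-x_1)\Big),$$ there exists a unique pair $a,b$ such that $x_1,x_2$ is a 2-periodic orbit of $f_{a,b}$, i.e. $f_{a,b}(x_1)=x_2$ and $f_{a,b}(x_2)=x_1$.
   Context: A 2-periodic orbit $x_1,x_2$ here means $x_1\ne x_2$ with $f_{a,b}(x_1)=x_2$, $f_{a,b}(x_2)=x_1$. The map $f_{a,b}$ is the reduction to $[0,1]$ of the quadratic stochastic operator $x'=x^2+2p(x)xy$, $y'=2(1-p(x))xy+y^2$ (with $y=1-x$), where $p(x)=a$ for $x\le\frac13$, $b$ for $\frac13<x<\frac23$, and $\frac12$ for $x\ge\frac23$. *)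

theory Defs
  imports Complex_Main
begin

definition f_ab :: "real \<Rightarrow> real \<Rightarrow> real \<Rightarrow> real" where
  "f_ab a b x =
     (if x \<le> 1/3 then (1 - 2*a) * x^2 + 2*a*x
      else if x < 2/3 then (1 - 2*b) * x^2 + 2*b*x
      else x)"

definition two_periodic_orbit :: "(real \<Rightarrow> real) \<Rightarrow> real \<Rightarrow> real \<Rightarrow> bool" where
  "two_periodic_orbit f x1 x2 \<longleftrightarrow> x1 \<noteq> x2 \<and> f x1 = x2 \<and> f x2 = x1"

end

theory Submission
  imports Defs
begin

lemma aux1: "0 < (x::real) \<Longrightarrow> x < 1/3 \<Longrightarrow> x * (2 - x) \<le> 5/9"
proof -
  assume "0 < x" "x < 1/3"
  have "0 \<le> (1/3 - x)*(5/3-x)" using \<open>x<1/3\<close> by (intro mult_nonneg_nonneg) auto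
  moreover have "(1/3 - x)*(5/3-x) = 5/9 - x*(2-x)" by (simp add: field_simps)
  ultimately show ?thesis by linarith
qed

lemma aux2: "0 < (x::real) \<Longrightarrow> x < 1/3 \<Longrightarrow> (x * (2 - x))^2 \<le> x"
proof -
  assume h: "0 < x" "x < 1/3"
  have "0 \<le> x^2" by simp
  hence q: "0 \<le> x^2 - 11/3*x + 25/9" using h by linarith
  have "0 \<le> (1/3 - x)*(x^2 - 11/3*x + 25/9)" using h q by (intro mult_nonneg_nonneg) auto
  moreover have "(1/3 - x)*(x^2 - 11/3*x + 25/9) = 25/27 - x*(2-x)^2" by (simp add: field_simps power2_eq_square)
  ultimately have "x*(2-x)^2 \<le> 25/27" by linarith
  hence "x*(x*(2-x)^2) \<le> x * 1" using h by (intro mult_left_mono) auto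
  thus ?thesis by (simp add: power2_eq_square algebra_simps)
qed

theorem theorem2p5:
  fixes x1 x2 :: real
  assumes "1 - sqrt 6 / 3 < x1" and "x1 < 1/3"
      and "1/3 < x2" and "x2 < x1 * (2 - x1)"
  shows "\<exists>!(a, b). a \<in> {0..1} \<and> b \<in> {0..1} \<and> two_periodic_orbit (f_ab a b) x1 x2"
proof -
  have "sqrt 6 < sqrt (3^2)" by (subst real_sqrt_less_iff) simp
  hence s6: "sqrt 6 < 3" by simp
  hence x1p: "0 < x1" using assms(1) by linarith
  have x2lt: "x2 < 5/9" using aux1[OF x1p assms(2)] assms(4) by linarith
  define a where "a = (x2 - x1^2) / (2*x1*(1-x1))"
  define b where "b = (x1 - x2^2) / (2*x2*(1-x2))"
  have d1: "2*x1*(1-x1) > 0" using x1p assms(2) by simp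
  have d2: "2*x2*(1-x2) > 0" using assms(3) x2lt by simp
  have fa: "f_ab a' b' x1 = x1^2 + a' * (2*x1*(1-x1))" for a' b'
    using assms(2) by (simp add: f_ab_def algebra_simps power2_eq_square)
  have fb: "f_ab a' b' x2 = x2^2 + b' * (2*x2*(1-x2))" for a' b'
    using assms(3) x2lt by (simp add: f_ab_def algebra_simps power2_eq_square)
  have "x1 * x1 \<le> x1 * 1" using x1p assms(2) by (intro mult_left_mono) auto
  hence "x1^2 \<le> x2" using assms(2,3) by (simp add: power2_eq_square)
  hence a0: "0 \<le> a" unfolding a_def using d1 by simp
  have "x2 - x1^2 \<le> 2*x1*(1-x1)" using assms(4) by (simp add: algebra_simps power2_eq_square)
  hence a1: "a \<le> 1" unfolding a_def using d1 by simp
  have "x2^2 < (x1*(2-x1))^2" using assms(3,4) by (intro power_strict_mono) auto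
  hence sq: "x2^2 < x1" using aux2[OF x1p assms(2)] by linarith
  have b0: "0 \<le> b" unfolding b_def using d2 sq by simp
  have "x2 * 1 \<le> x2 * (2 - x2)" using assms(3) x2lt by (intro mult_left_mono) auto
  moreover have "x2 * (2 - x2) = 2*x2*(1-x2) + x2^2" by (simp add: algebra_simps power2_eq_square)
  ultimately have "x1 - x2^2 \<le> 2*x2*(1-x2)" using assms(2,3) by linarith
  hence b1: "b \<le> 1" unfolding b_def using d2 by simp
  have ea: "f_ab a b x1 = x2" proof -
    have "a * (2*x1*(1-x1)) = x2 - x1^2" unfolding a_def using d1 x1p assms(2) by simp
    thus ?thesis using fa[of a b] by simp
  qed
  have eb: "f_ab a b x2 = x1" proof -
    have "b * (2*x2*(1-x2)) = x1 - x2^2" unfolding b_def using d2 x2lt assms(3) by simp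
    thus ?thesis using fb[of a b] by simp
  qed
  show ?thesis
  proof (rule ex1I[where a="(a,b)"])
    show "case (a, b) of (a, b) \<Rightarrow> a \<in> {0..1} \<and> b \<in> {0..1} \<and> two_periodic_orbit (f_ab a b) x1 x2"
      using a0 a1 b0 b1 ea eb assms(2,3) by (auto simp: two_periodic_orbit_def)
  next
    fix p assume "case p of (a, b) \<Rightarrow> a \<in> {0..1} \<and> b \<in> {0..1} \<and> two_periodic_orbit (f_ab a b) x1 x2"
    then obtain a' b' where p: "p = (a',b')" and h1: "f_ab a' b' x1 = x2" and h2: "f_ab a' b' x2 = x1"
      by (cases p) (auto simp: two_periodic_orbit_def)
    have "a' = a" using h1 fa[of a' b'] d1 x1p assms(2) unfolding a_def by (simp add: eq_divide_eq)
    moreover have "b' = b" using h2 fb[of a' b'] d2 x2lt assms(3) unfolding b_def by (simp add: eq_divide_eq)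
    ultimately show "p = (a, b)" using p by simp
  qed
qed

end
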